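(* Let $a\in \mathcal{A}$ and $k\in \mathbb{N}$. Then the following are equivalent: (1) $a\in \mathcal{A}^{\mathrm{gcEP}}$; (2) $a^k\in \mathcal{A}^{\mathrm{gcEP}}$. In this case, $(a^k)^{\mathrm{gcEP}}=(a^{\mathrm{gcEP}})^k$ and $a^{\mathrm{gcEP}}=a^{k-1}(a^k)^{\mathrm{gcEP}}$.
   Context: $\mathcal{A}$ is a complex Banach *-algebra with identity. An element $a$ has a generalized core-EP inverse if there is $x\in\mathcal{A}$ with $x=ax^2$, $(ax)^*=ax$, $\lim_{n\to\infty}\|a^n-xa^{n+1}\|^{1/n}=0$; such $x$ is unique, denoted $a^{\mathrm{gcEP}}$, and $\mathcal{A}^{\mathrm{gcEP}}$ is the set of such $a$. *)

theory Defs
  imports "HOL-Analysis.Analysis"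
begin

class cbanach_star_algebra = real_normed_algebra_1 + banach +
  fixes scaleC :: "complex \<Rightarrow> 'a \<Rightarrow> 'a"
    and adj :: "'a \<Rightarrow> 'a"
  assumes scaleC_of_real: "scaleC (complex_of_real r) x = scaleR r x"
    and scaleC_add_right: "scaleC c (x + y) = scaleC c x + scaleC c y"
    and scaleC_add_left: "scaleC (c + d) x = scaleC c x + scaleC d x"
    and scaleC_scaleC: "scaleC c (scaleC d x) = scaleC (c * d) x"
    and scaleC_one: "scaleC 1 x = x"
    and norm_scaleC: "norm (scaleC c x) = cmod c * norm x"
    and mult_scaleC_left: "scaleC c x * y = scaleC c (x * y)"
    and mult_scaleC_right: "x * scaleC c y = scaleC c (x * y)"
    and adj_add: "adj (x + y) = adj x + adj y"
    and adj_scaleC: "adj (scaleC c x) = scaleC (cnj c) (adj x)"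
    and adj_mult: "adj (x * y) = adj y * adj x"
    and adj_adj: "adj (adj x) = x"

definition is_gcEP_inverse :: "'a::cbanach_star_algebra \<Rightarrow> 'a \<Rightarrow> bool" where
  "is_gcEP_inverse a x \<longleftrightarrow>
     x = a * x ^ 2 \<and> adj (a * x) = a * x \<and>
     (\<lambda>n. root n (norm (a ^ n - x * a ^ (n + 1)))) \<longlonglongrightarrow> 0"

definition has_gcEP :: "'a::cbanach_star_algebra \<Rightarrow> bool" where
  "has_gcEP a \<longleftrightarrow> (\<exists>x. is_gcEP_inverse a x)"

definition gcEP :: "'a::cbanach_star_algebra \<Rightarrow> 'a" where
  "gcEP a = (THE x. is_gcEP_inverse a x)"

end

theory Submission
  imports Defs
begin

definition qnil :: "(nat \<Rightarrow> 'a::real_normed_vector) \<Rightarrow> bool" where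
  "qnil g \<longleftrightarrow> (\<forall>\<epsilon>>0. \<exists>C. \<forall>n. norm (g n) \<le> C * \<epsilon>^n)"

lemma qnil_ev:
  assumes "\<And>\<epsilon>. \<epsilon>>0 \<Longrightarrow> \<exists>C. eventually (\<lambda>n. norm (g n) \<le> C * \<epsilon>^n) sequentially"
  shows "qnil g"
  unfolding qnil_def
proof (intro allI impI)
  fix \<epsilon>::real assume e: "\<epsilon>>0"
  obtain C N where CN: "\<And>n. n \<ge> N \<Longrightarrow> norm (g n) \<le> C * \<epsilon>^n"
    using assms[OF e] unfolding eventually_sequentially by blast
  define C' where "C' = \<bar>C\<bar> + (\<Sum>m<N. norm (g m) / \<epsilon>^m)"
  have S: "0 \<le> (\<Sum>m<N. norm (g m) / \<epsilon>^m)" using e by (intro sum_nonneg) simp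
  show "\<exists>C. \<forall>n. norm (g n) \<le> C * \<epsilon>^n"
  proof (intro exI allI)
    fix n
    show "norm (g n) \<le> C' * \<epsilon>^n"
    proof (cases "n \<ge> N")
      case True
      have "C * \<epsilon>^n \<le> C' * \<epsilon>^n" using S e by (intro mult_right_mono) (auto simp: C'_def)
      with CN[OF True] show ?thesis by linarith
    next
      case False
      then have "norm (g n) / \<epsilon>^n \<le> (\<Sum>m<N. norm (g m) / \<epsilon>^m)"
        using e by (intro member_le_sum) auto
      then have "norm (g n) / \<epsilon>^n \<le> C'" unfolding C'_def by linarith
      then show ?thesis using e by (simp add: pos_divide_le_eq)
    qed
  qed
qed

lemma qnil_C0: assumes "\<And>n. norm (f n) \<le> C * e^n" shows "0 \<le> C"
  using assms[of 0] by (metis norm_ge_zero order_trans power_0 mult_1_right)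

lemma qnil_mono:
  assumes "qnil f" "0 \<le> D" "0 \<le> c"
    and ev: "eventually (\<lambda>n. norm (g n) \<le> D * c^n * norm (f n)) sequentially"
  shows "qnil g"
proof (rule qnil_ev)
  fix \<epsilon>::real assume e: "\<epsilon> > 0"
  have e1: "\<epsilon>/(c+1) > 0" using e assms(3) by simp
  obtain C where C: "\<And>n. norm (f n) \<le> C * (\<epsilon>/(c+1))^n"
    using assms(1) e1 unfolding qnil_def by blast
  have C0: "0 \<le> C" by (rule qnil_C0[OF C])
  show "\<exists>C. eventually (\<lambda>n. norm (g n) \<le> C * \<epsilon>^n) sequentially"
  proof (intro exI, rule eventually_mono[OF ev])
    fix n assume h: "norm (g n) \<le> D * c^n * norm (f n)"
    have "D * c^n * norm (f n) \<le> D * c^n * (C * (\<epsilon>/(c+1))^n)"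
      using C assms by (intro mult_left_mono) auto
    also have "\<dots> = (D*C) * (c * (\<epsilon>/(c+1)))^n" by (simp only: power_mult_distrib ac_simps)
    also have "\<dots> \<le> (D*C) * \<epsilon>^n"
    proof (intro mult_left_mono power_mono)
      show "c * (\<epsilon> / (c + 1)) \<le> \<epsilon>" using e assms(3) by (simp add: field_simps)
    qed (use e assms C0 in auto)
    finally show "norm (g n) \<le> (D*C) * \<epsilon>^n" using h by linarith
  qed
qed

lemma qnil_reindex:
  assumes "qnil f" "0 \<le> D" and hk: "\<And>n. n \<le> s * h n + K"
    and ev: "eventually (\<lambda>n. norm (g n) \<le> D * norm (f (h n))) sequentially"
  shows "qnil g"
proof (rule qnil_ev)
  fix \<epsilon>::real assume e: "\<epsilon>>0"
  define e' where "e' = min \<epsilon> 1"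
  have e': "0 < e'" "e' \<le> 1" "e' \<le> \<epsilon>" using e by (auto simp: e'_def)
  obtain C where C: "\<And>m. norm (f m) \<le> C * (e'^s)^m"
    using assms(1) e' unfolding qnil_def by (meson zero_less_power)
  have C0: "0 \<le> C" by (rule qnil_C0[OF C])
  show "\<exists>C. eventually (\<lambda>n. norm (g n) \<le> C * \<epsilon>^n) sequentially"
  proof (intro exI, rule eventually_mono[OF ev])
    fix n assume h: "norm (g n) \<le> D * norm (f (h n))"
    have "e'^(s * h n) * e'^K \<le> \<epsilon>^n"
    proof -
      have "e'^(s*h n) * e'^K = e'^(s*h n + K)" by (simp add: power_add)
      also have "\<dots> \<le> e'^n" by (rule power_decreasing[OF hk]) (use e' in auto)
      also have "\<dots> \<le> \<epsilon>^n" using e' by (intro power_mono) auto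
      finally show ?thesis .
    qed
    then have P: "e'^(s*h n) \<le> \<epsilon>^n / e'^K" using e' by (simp add: pos_le_divide_eq)
    have "norm (g n) \<le> D * (C * (e'^s)^(h n))"
      using h C[of "h n"] assms(2) by (meson mult_left_mono order_trans)
    also have "\<dots> = (D*C) * e'^(s*h n)" by (simp add: power_mult)
    also have "\<dots> \<le> (D*C) * (\<epsilon>^n / e'^K)" using P assms(2) C0 by (intro mult_left_mono) auto
    also have "\<dots> = (D*C/e'^K) * \<epsilon>^n" by simp
    finally show "norm (g n) \<le> (D*C/e'^K) * \<epsilon>^n" .
  qed
qed

lemma qnil_add:
  assumes "qnil f" "qnil g" shows "qnil (\<lambda>n. f n + g n)"
  unfolding qnil_def
proof (intro allI impI)
  fix \<epsilon>::real assume e: "\<epsilon>>0"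
  obtain C1 where C1: "\<And>n. norm (f n) \<le> C1 * \<epsilon>^n" using assms(1) e unfolding qnil_def by blast
  obtain C2 where C2: "\<And>n. norm (g n) \<le> C2 * \<epsilon>^n" using assms(2) e unfolding qnil_def by blast
  show "\<exists>C. \<forall>n. norm (f n + g n) \<le> C * \<epsilon>^n"
  proof (intro exI allI)
    fix n
    have "norm (f n + g n) \<le> norm (f n) + norm (g n)" by (rule norm_triangle_ineq)
    also have "\<dots> \<le> (C1 + C2) * \<epsilon>^n" using C1[of n] C2[of n] by (simp add: distrib_right)
    finally show "norm (f n + g n) \<le> (C1 + C2) * \<epsilon>^n" .
  qed
qed

lemma qnil_zero: "qnil (\<lambda>n. 0)"
  unfolding qnil_def by (auto intro: exI[of _ 0])

lemma qnil_sum: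
  assumes "finite I" "\<And>i. i \<in> I \<Longrightarrow> qnil (f i)"
  shows "qnil (\<lambda>n. \<Sum>i\<in>I. f i n)"
  using assms
proof (induction I rule: finite_induct)
  case empty then show ?case by (simp add: qnil_zero)
next
  case (insert i I)
  then have "qnil (\<lambda>n. f i n + (\<Sum>i\<in>I. f i n))" by (intro qnil_add) auto
  then show ?case using insert by simp
qed

lemma qnil_const:
  assumes "qnil (\<lambda>n. z)" shows "z = 0"
proof -
  obtain C where C: "\<And>n. norm z \<le> C * (1/2)^n" using assms unfolding qnil_def
    by (metis divide_pos_pos zero_less_numeral zero_less_one)
  have "(\<lambda>n. C*(1/2::real)^n) \<longlonglongrightarrow> C * 0"
    by (intro tendsto_mult tendsto_const LIMSEQ_power_zero) auto
  then have "norm z \<le> 0" using C by (intro LIMSEQ_le_const) auto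
  then show ?thesis by simp
qed

lemma qnil_iff: "qnil g \<longleftrightarrow> (\<lambda>n. root n (norm (g n))) \<longlonglongrightarrow> 0"
proof
  assume q: "qnil g"
  show "(\<lambda>n. root n (norm (g n))) \<longlonglongrightarrow> 0"
  proof (rule order_tendstoI)
    fix a :: real assume "a < 0"
    then show "eventually (\<lambda>n. a < root n (norm (g n))) sequentially"
      by (intro always_eventually allI) (metis less_le_trans norm_ge_zero real_root_ge_zero)
  next
    fix \<epsilon> :: real assume e: "0 < \<epsilon>"
    obtain C where C: "\<And>n. norm (g n) \<le> C * (\<epsilon>/2)^n" using q e unfolding qnil_def
      by (metis half_gt_zero)
    define C' where "C' = max C 1"
    have C': "\<And>n. norm (g n) \<le> C' * (\<epsilon>/2)^n"
      using C e by (smt (verit, best) C'_def mult_right_mono zero_le_power zero_less_divide_iff)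
    have "(\<lambda>n. root n C') \<longlonglongrightarrow> 1" by (rule LIMSEQ_root_const) (simp add: C'_def)
    then have ev: "eventually (\<lambda>n. root n C' < 2) sequentially"
      by (rule order_tendstoD) simp
    show "eventually (\<lambda>n. root n (norm (g n)) < \<epsilon>) sequentially"
      using ev eventually_gt_at_top[of 0]
    proof eventually_elim
      case (elim n)
      have "root n (norm (g n)) \<le> root n (C' * (\<epsilon>/2)^n)"
        using C' elim by (simp add: real_root_le_iff)
      also have "\<dots> = root n C' * (\<epsilon>/2)"
        using elim e by (simp add: real_root_mult real_root_pos2 del: real_root_power)
      also have "\<dots> < 2 * (\<epsilon>/2)" using elim e by (intro mult_strict_right_mono) auto
      finally show ?case by simp
    qed
  qed
next
  assume l: "(\<lambda>n. root n (norm (g n))) \<longlonglongrightarrow> 0"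
  show "qnil g"
  proof (rule qnil_ev)
    fix \<epsilon>::real assume e: "\<epsilon> > 0"
    have "eventually (\<lambda>n. root n (norm (g n)) < \<epsilon>) sequentially"
      using l e by (rule order_tendstoD)
    then have "eventually (\<lambda>n. norm (g n) \<le> 1 * \<epsilon>^n) sequentially"
      using eventually_gt_at_top[of 0]
    proof eventually_elim
      case (elim n)
      have "norm (g n) = root n (norm (g n)) ^ n" using elim by (simp add: real_root_pow_pos2)
      also have "\<dots> \<le> \<epsilon>^n" using elim by (intro power_mono) auto
      finally show ?case by simp
    qed
    then show "\<exists>C. eventually (\<lambda>n. norm (g n) \<le> C * \<epsilon>^n) sequentially" by blast
  qed
qed


definition EE :: "'a::real_normed_algebra_1 \<Rightarrow> 'a \<Rightarrow> nat \<Rightarrow> 'a" where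
  "EE a x n = a^n - x * a^(n+1)"

lemma P1: fixes b x :: "'a::ring_1" assumes "x = b*x^2"
  shows "b * x^(Suc (Suc m)) = x^(Suc m)"
proof -
  have "b * x^(Suc (Suc m)) = (b * x^2) * x^m" by (simp add: mult.assoc power2_eq_square)
  also have "\<dots> = x^(Suc m)" using assms[symmetric] by simp
  finally show ?thesis .
qed

lemma P2: fixes b x :: "'a::ring_1" assumes "x = b*x^2"
  shows "b^j * x^(Suc m + j) = x^(Suc m)"
proof (induction j)
  case 0 then show ?case by simp
next
  case (Suc j)
  have e: "Suc m + Suc j = Suc (Suc (m+j))" by simp
  have "b^(Suc j) * x^(Suc m + Suc j) = b^j * (b * x^(Suc (Suc (m + j))))"
    by (simp only: e power_Suc2[of b j] mult.assoc)
  also have "\<dots> = b^j * x^(Suc m + j)" using P1[OF assms] by simp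
  finally show ?case using Suc by simp
qed

lemma P2': fixes b x :: "'a::ring_1" assumes "x = b*x^2"
  shows "b^j * x^(Suc j) = x"
  using P2[OF assms, of j 0] by simp

lemma P3: fixes b x :: "'a::ring_1" assumes "x = b*x^2"
  shows "b^(Suc j) * x^(Suc j) = b*x"
proof (induction j)
  case 0 then show ?case by simp
next
  case (Suc j)
  have "b^(Suc (Suc j)) * x^(Suc (Suc j)) = b^(Suc j) * (b * x^(Suc (Suc j)))"
    by (simp only: power_Suc2[of b "Suc j"] mult.assoc)
  also have "\<dots> = b^(Suc j) * x^(Suc j)" using P1[OF assms] by simp
  finally show ?case using Suc by simp
qed

lemma tele: "a^m - x^j * a^(m+j) = (\<Sum>i<j. x^i * EE a x (m+i))"
proof (induction j)
  case 0 then show ?case by simp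
next
  case (Suc j)
  have "x^j * EE a x (m+j) = x^j * a^(m+j) - (x^j * x) * a^(m + j + 1)"
    by (simp only: EE_def right_diff_distrib mult.assoc)
  also have "\<dots> = x^j * a^(m+j) - x^(Suc j) * a^(m + Suc j)"
    by (simp only: power_Suc2[symmetric]) simp
  finally have "x^j * EE a x (m+j) = x^j * a^(m+j) - x^(Suc j) * a^(m + Suc j)" .
  then show ?case using Suc by (simp add: algebra_simps)
qed

lemma zero_by:
  fixes f :: "nat \<Rightarrow> 'a::real_normed_algebra_1"
  assumes "qnil f" "\<And>n. z = u * f n * v * w^n"
  shows "z = 0"
proof -
  have "qnil (\<lambda>n. z)"
  proof (rule qnil_mono[OF assms(1), of "norm u * norm v" "norm w"])
    show "eventually (\<lambda>n. norm z \<le> norm u * norm v * norm w ^ n * norm (f n)) sequentially"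
    proof (intro always_eventually allI)
      fix n
      have "norm z \<le> norm (u * f n * v) * norm (w^n)"
        unfolding assms(2)[of n] by (rule norm_mult_ineq)
      also have "\<dots> \<le> (norm (u * f n) * norm v) * norm (w^n)"
        by (intro mult_right_mono norm_mult_ineq) auto
      also have "\<dots> \<le> (norm u * norm (f n) * norm v) * norm (w^n)"
        by (intro mult_right_mono norm_mult_ineq) auto
      finally have "norm z \<le> norm u * norm (f n) * norm v * norm (w^n)" .
      also have "\<dots> \<le> norm u * norm (f n) * norm v * norm w ^ n"
        by (intro mult_left_mono norm_power_ineq) auto
      finally show "norm z \<le> norm u * norm v * norm w ^ n * norm (f n)" by (simp add: ac_simps)
    qed
  qed auto
  then show ?thesis by (rule qnil_const)
qed

lemma gc_iff: "is_gcEP_inverse a x \<longleftrightarrow> x = a*x^2 \<and> adj (a*x) = a*x \<and> qnil (EE a x)"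
  unfolding is_gcEP_inverse_def qnil_iff EE_def ..

lemma gc_xax: assumes "is_gcEP_inverse a x" shows "x * a * x = x"
proof -
  have x2: "x = a*x^2" and q: "qnil (EE a x)" using assms gc_iff by auto
  have "x - x*a*x = 0"
  proof (rule zero_by[OF q, of _ 1 x x])
    fix n
    have xn: "x = a^n * x^(Suc n)" using P2'[OF x2] by simp
    have "x*a*x = x*a*(a^n * x^(Suc n))" using xn by simp
    also have "\<dots> = x * (a*a^n) * x^(Suc n)" by (simp only: mult.assoc)
    finally have "x*a*x = x * a^(n+1) * x^(Suc n)" by simp
    then have "x - x*a*x = (a^n - x*a^(n+1)) * x^(Suc n)"
      using xn by (metis left_diff_distrib)
    then show "x - x*a*x = 1 * EE a x n * x * x^n" by (simp add: EE_def mult.assoc)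
  qed
  then show ?thesis by simp
qed

lemma gc_unique:
  fixes a :: "'a::cbanach_star_algebra"
  assumes gx: "is_gcEP_inverse a x" and gy: "is_gcEP_inverse a y" shows "x = y"
proof -
  have x2: "x = a*x^2" and sx: "adj (a*x) = a*x" and qx: "qnil (EE a x)" using gx gc_iff by auto
  have y2: "y = a*y^2" and sy: "adj (a*y) = a*y" and qy: "qnil (EE a y)" using gy gc_iff by auto
  have xax: "x*a*x = x" and yay: "y*a*y = y" using gx gy gc_xax by auto
  have qp: "(a*y)*(a*x) = a*x" if g1: "x = a*x^2" and g2: "qnil (EE a y)" for x y
  proof -
    have "a*x - (a*y)*(a*x) = 0"
    proof (rule zero_by[OF g2, of _ a x x])
      fix n
      have xn: "x = a^n * x^(Suc n)" using P2'[OF g1] by simp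
      have p: "a*x = a^(n+1) * x^(Suc n)" by (subst xn) (simp add: mult.assoc)
      have "a*x - (a*y)*(a*x) = (a^(n+1) - a*y*a^(n+1)) * x^(Suc n)"
        using p by (simp add: left_diff_distrib mult.assoc)
      also have "\<dots> = a * EE a y n * x * x^n"
        by (simp add: EE_def right_diff_distrib mult.assoc power_Suc)
      finally show "a*x - (a*y)*(a*x) = a * EE a y n * x * x^n" .
    qed
    then show ?thesis by simp
  qed
  have pq: "a*x = a*y"
  proof -
    have "a*x = adj (a*x)" using sx by simp
    also have "\<dots> = adj ((a*y)*(a*x))" using qp[OF x2 qy] by simp
    also have "\<dots> = (a*x)*(a*y)" using sx sy by (simp add: adj_mult)
    also have "\<dots> = a*y" using qp[OF y2 qx] .
    finally show ?thesis .
  qed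
  have "y - x = 0"
  proof (rule zero_by[OF qy, of _ "-1" x x])
    fix n
    have xn: "x = a^n * x^(Suc n)" using P2'[OF x2] by simp
    have "y = y*(a*x)" using yay pq by (simp add: mult.assoc)
    also have "\<dots> = y*(a*(a^n*x^(Suc n)))" using xn by simp
    also have "\<dots> = y*(a*a^n)*x^(Suc n)" by (simp only: mult.assoc)
    also have "\<dots> = y*a^(n+1)*x^(Suc n)" by simp
    finally have "y = y*a^(n+1)*x^(Suc n)" .
    then have "y - x = -((a^n - y*a^(n+1)) * x^(Suc n))"
      using xn by (simp add: left_diff_distrib)
    then show "y - x = -1 * EE a y n * x * x^n" by (simp only: EE_def mult.assoc power_Suc mult_minus_left mult_1_left)
  qed
  then show ?thesis by simp
qed

lemma gcEP_eq: fixes a :: "'a::cbanach_star_algebra"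
  assumes "is_gcEP_inverse a x" shows "gcEP a = x"
  unfolding gcEP_def using assms gc_unique by blast


lemma pow_comm: "(a::'a::monoid_mult)^p * a^q = a^q * a^p"
  by (simp add: power_add[symmetric] add.commute)

lemma fw:
  fixes a :: "'a::cbanach_star_algebra"
  assumes g: "is_gcEP_inverse a x" and k: "k \<ge> 1"
  shows "is_gcEP_inverse (a^k) (x^k)"
proof -
  have x2: "x = a*x^2" and sx: "adj (a*x) = a*x" and qx: "qnil (EE a x)" using g gc_iff by auto
  obtain j where kj: "k = Suc j" using k by (cases k) auto
  have e: "(x^k)^2 = x^(Suc j + k)" by (simp only: power2_eq_square power_add[symmetric] kj)
  have "a^k * x^(Suc j + k) = x^k" using P2[OF x2, of k j] unfolding kj[symmetric] .
  then have 1: "x^k = a^k * (x^k)^2" by (simp only: e)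
  have 2: "a^k * x^k = a*x" using P3[OF x2, of j] by (simp add: kj)
  have 3: "qnil (EE (a^k) (x^k))"
  proof -
    have eq: "EE (a^k) (x^k) = (\<lambda>n. \<Sum>i<k. x^i * EE a x (k*n+i))"
    proof
      fix n
      have pk: "(a^k)^(n+1) = a^(k*n + k)"
        by (simp only: power_mult[symmetric]) (simp add: algebra_simps)
      have "EE (a^k) (x^k) n = a^(k*n) - x^k * a^(k*n + k)"
        unfolding EE_def pk by (simp only: power_mult[symmetric])
      also have "\<dots> = (\<Sum>i<k. x^i * EE a x (k*n+i))" by (rule tele)
      finally show "EE (a^k) (x^k) n = (\<Sum>i<k. x^i * EE a x (k*n+i))" .
    qed
    show ?thesis unfolding eq
    proof (rule qnil_sum)
      fix i assume "i \<in> {..<k}"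
      show "qnil (\<lambda>n. x^i * EE a x (k*n+i))"
      proof (rule qnil_reindex[OF qx, of "norm (x^i)" 1 "\<lambda>n. k*n+i" 0])
        fix n show "n \<le> 1 * (k*n+i) + 0" using k by (simp add: trans_le_add1)
      next
        show "eventually (\<lambda>n. norm (x^i * EE a x (k*n+i)) \<le> norm (x^i) * norm (EE a x (k*n+i))) sequentially"
          by (intro always_eventually allI norm_mult_ineq)
      qed simp
    qed simp
  qed
  show ?thesis using 1 2 3 sx gc_iff by metis
qed

lemma bw:
  fixes a :: "'a::cbanach_star_algebra"
  assumes g: "is_gcEP_inverse (a^k) y" and k: "k = Suc j"
  shows "is_gcEP_inverse a (a^j * y)"
proof -
  define b where "b = a^k"
  have y2: "y = b*y^2" and sy: "adj (b*y) = b*y" and qy: "qnil (EE b y)" using g gc_iff b_def by auto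
  have ab: "a * (a^j * y) = b * y" by (simp add: b_def k mult.assoc)
  have comm: "a^j * b^m = b^m * a^j" for m
    by (simp add: b_def power_mult[symmetric] pow_comm)
  have comm2: "a^j * (b^m * Z) = b^m * (a^j * Z)" for m Z
    by (simp add: mult.assoc[symmetric] comm)
  have 1: "a^j * y = a * (a^j * y)^2"
  proof -
    have "a^j * y - b*y*(a^j*y) = 0"
    proof (rule zero_by[OF qy, of _ b "a^j * y^2" y])
      fix n
      have yn: "y = b^(n+1) * y^(Suc (n+1))" by (rule sym[OF P2'[OF y2]])
      have "b*y*(a^j*y) = b*y*(a^j*(b^(n+1) * y^(Suc (n+1))))" using arg_cong[OF yn, of "\<lambda>t. b*y*(a^j*t)"] .
      also have "\<dots> = (b*y*b^(n+1)) * a^j * y^(Suc (n+1))" by (simp only: comm2 mult.assoc)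
      also have "b*y*b^(n+1) = b^(n+1) - b * EE b y n"
        by (simp add: EE_def right_diff_distrib mult.assoc)
      finally have "b*y*(a^j*y) = b^(n+1) * a^j * y^(Suc (n+1)) - b * EE b y n * a^j * y^(Suc (n+1))"
        by (simp add: left_diff_distrib)
      also have "b^(n+1) * a^j * y^(Suc (n+1)) = a^j * y"
        using arg_cong[OF yn, of "\<lambda>t. a^j*t"] by (simp only: comm2 mult.assoc)
      finally have "b*y*(a^j*y) = a^j * y - b * EE b y n * a^j * y^(Suc (n+1))" .
      moreover have "y^(Suc (n+1)) = y^2 * y^n" by (simp add: power2_eq_square mult.assoc)
      ultimately show "a^j*y - b*y*(a^j*y) = b * EE b y n * (a^j * y^2) * y^n"
        by (simp add: mult.assoc)
    qed
    then have "a^j * y = b*y*(a^j*y)" by simp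
    also have "\<dots> = (a*(a^j*y))*(a^j*y)" using ab by simp
    also have "\<dots> = a * (a^j * y)^2" by (simp only: power2_eq_square mult.assoc)
    finally show ?thesis .
  qed
  have 2: "adj (a * (a^j * y)) = a * (a^j * y)" using ab sy by simp
  have 3: "qnil (EE a (a^j * y))"
  proof (rule qnil_reindex[OF qy, of "norm (a^j) * (1 + norm a)^k" k "\<lambda>n. (n+1) div k - 1" "2*k"])
    fix n
    have A: "k * ((n+1) div k) + (n+1) mod k = n+1" by (rule mult_div_mod_eq)
    have B: "(n+1) mod k < k" using k by simp
    have C: "k * ((n+1) div k - 1) = k * ((n+1) div k) - k" by (simp add: diff_mult_distrib2)
    show "n \<le> k * ((n+1) div k - 1) + 2*k" unfolding C using A B by linarith
  next
    show "eventually (\<lambda>n. norm (EE a (a^j * y) n) \<le> norm (a^j) * (1 + norm a)^k * norm (EE b y ((n+1) div k - 1))) sequentially"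
      using eventually_ge_at_top[of k]
    proof eventually_elim
      case (elim n)
      define m where "m = (n+1) div k - 1"
      define r where "r = (n+1) mod k"
      have dm: "k * ((n+1) div k) + r = n+1" unfolding r_def by (rule mult_div_mod_eq)
      have rk: "r < k" using k by (simp add: r_def)
      have "k div k \<le> (n+1) div k" by (rule div_le_mono) (use elim in simp)
      then have q1: "(n+1) div k \<ge> 1" using k by simp
      have km: "k*(m+1) + r = n+1" using dm q1 by (simp add: m_def)
      have nn: "n = j + k*m + r" using km k by simp
      have bm: "b^i = a^(k*i)" for i by (simp add: b_def power_mult)
      have id: "EE a (a^j * y) n = a^j * EE b y m * a^r"
      proof -
        have "a^j * EE b y m * a^r = a^j*b^m*a^r - a^j*y*b^(m+1)*a^r"
          by (simp add: EE_def right_diff_distrib left_diff_distrib mult.assoc)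
        also have "a^j*b^m*a^r = a^n" by (simp add: bm nn power_add mult.assoc)
        also have "a^j*y*b^(m+1)*a^r = a^j*y*a^(n+1)"
          by (simp only: bm mult.assoc power_add[symmetric] km)
        finally show ?thesis by (simp add: EE_def mult.assoc)
      qed
      have "norm (a^j * EE b y m * a^r) \<le> norm (a^j * EE b y m) * norm (a^r)" by (rule norm_mult_ineq)
      also have "\<dots> \<le> (norm (a^j) * norm (EE b y m)) * (1 + norm a)^k"
      proof (intro mult_mono norm_mult_ineq)
        have "norm (a^r) \<le> norm a ^ r" by (rule norm_power_ineq)
        also have "\<dots> \<le> (1 + norm a)^r" by (intro power_mono) auto
        also have "\<dots> \<le> (1 + norm a)^k" using rk by (intro power_increasing) auto
        finally show "norm (a^r) \<le> (1 + norm a)^k" .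
      qed auto
      finally show ?case unfolding id m_def[symmetric] by (simp add: ac_simps)
    qed
  qed simp
  show ?thesis using 1 2 3 gc_iff by metis
qed

theorem lemma3p4:
  fixes a :: "'a::cbanach_star_algebra" and k :: nat
  assumes "k \<ge> 1"
  shows "(has_gcEP a \<longleftrightarrow> has_gcEP (a ^ k)) \<and>
         (has_gcEP a \<longrightarrow> gcEP (a ^ k) = (gcEP a) ^ k \<and> gcEP a = a ^ (k - 1) * gcEP (a ^ k))"
proof -
  obtain j where kj: "k = Suc j" using assms by (cases k) auto
  have I: "has_gcEP a \<longleftrightarrow> has_gcEP (a ^ k)"
  proof
    assume "has_gcEP a"
    then obtain x where "is_gcEP_inverse a x" unfolding has_gcEP_def by blast
    then show "has_gcEP (a^k)" unfolding has_gcEP_def using fw assms by blast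
  next
    assume "has_gcEP (a^k)"
    then obtain y where "is_gcEP_inverse (a^k) y" unfolding has_gcEP_def by blast
    then show "has_gcEP a" unfolding has_gcEP_def using bw kj by blast
  qed
  have II: "gcEP (a ^ k) = (gcEP a) ^ k \<and> gcEP a = a ^ (k - 1) * gcEP (a ^ k)" if h: "has_gcEP a"
  proof -
    obtain x where g: "is_gcEP_inverse a x" using h unfolding has_gcEP_def by blast
    have ga: "gcEP a = x" by (rule gcEP_eq[OF g])
    have gk: "gcEP (a^k) = x^k" by (rule gcEP_eq[OF fw[OF g assms]])
    have x2: "x = a*x^2" using g gc_iff by auto
    have "a^j * x^(Suc j) = x" by (rule P2'[OF x2])
    then show ?thesis using ga gk kj by simp
  qed
  show ?thesis using I II by blast
qed

end
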